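(* Let $X$ be a real Hilbert space, $T:X\to X$, $C\subseteq X$ nonempty and $\varphi:[0,\infty)\to[0,\infty)$ an increasing function vanishing only at $0$. If $T$ is uniformly $(P_2)$ on $C$ with modulus $\varphi$, then $T$ is uniformly firmly nonexpansive on $C$ with modulus $\varphi$.
   Context: $T$ is uniformly firmly nonexpansive on $C$ with modulus $\varphi$ if $T(C)\subseteq C$ and for all $x,y\in C$, $t\in[0,1]$: $\|Tx-Ty\|^2\le\|((1-t)x+tTx)-((1-t)y+tTy)\|^2-2(1-t)\varphi(\|Tx-Ty\|)$. $T$ is uniformly $(P_2)$ on $C$ with modulus $\varphi$ if $T(C)\subseteq C$ and for all $x,y\in C$: $2\|Tx-Ty\|^2\le\|x-Ty\|^2+\|y-Tx\|^2-\|x-Tx\|^2-\|y-Ty\|^2-2\varphi(\|Tx-Ty\|)$. *)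

theory Defs
  imports "HOL-Analysis.Analysis"
begin

definition unif_firmly_nonexpansive ::
  "('a::real_inner \<Rightarrow> 'a) \<Rightarrow> 'a set \<Rightarrow> (real \<Rightarrow> real) \<Rightarrow> bool" where
  "unif_firmly_nonexpansive T C \<phi> \<longleftrightarrow> T ` C \<subseteq> C \<and>
     (\<forall>x\<in>C. \<forall>y\<in>C. \<forall>t\<in>{0..1::real}.
        (norm (T x - T y))\<^sup>2 \<le>
          (norm (((1 - t) *\<^sub>R x + t *\<^sub>R T x) - ((1 - t) *\<^sub>R y + t *\<^sub>R T y)))\<^sup>2
          - 2 * (1 - t) * \<phi> (norm (T x - T y)))"

definition unif_P2 ::
  "('a::real_inner \<Rightarrow> 'a) \<Rightarrow> 'a set \<Rightarrow> (real \<Rightarrow> real) \<Rightarrow> bool" where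
  "unif_P2 T C \<phi> \<longleftrightarrow> T ` C \<subseteq> C \<and>
     (\<forall>x\<in>C. \<forall>y\<in>C.
        2 * (norm (T x - T y))\<^sup>2 \<le>
          (norm (x - T y))\<^sup>2 + (norm (y - T x))\<^sup>2 - (norm (x - T x))\<^sup>2
          - (norm (y - T y))\<^sup>2 - 2 * \<phi> (norm (T x - T y)))"

end

theory Submission
  imports Defs
begin

theorem proposition4p3:
  fixes T :: "'a::{real_inner, complete_space} \<Rightarrow> 'a"
    and C :: "'a set"
    and \<phi> :: "real \<Rightarrow> real"
  assumes "C \<noteq> {}"
    and "mono_on {0..} \<phi>"
    and "\<And>t. t \<ge> 0 \<Longrightarrow> \<phi> t \<ge> 0"
    and "\<And>t. t \<ge> 0 \<Longrightarrow> \<phi> t = 0 \<longleftrightarrow> t = 0"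
    and "unif_P2 T C \<phi>"
  shows "unif_firmly_nonexpansive T C \<phi>"
  unfolding unif_firmly_nonexpansive_def
proof (intro conjI ballI)
  show "T ` C \<subseteq> C" using assms(5) unfolding unif_P2_def by blast
next
  fix x y t assume x: "x \<in> C" and y: "y \<in> C" and t: "t \<in> {0..1::real}"
  define a where "a = x - y"
  define b where "b = T x - T y"
  define p where "p = \<phi> (norm (T x - T y))"
  have P: "2 * (norm (T x - T y))\<^sup>2 \<le>
          (norm (x - T y))\<^sup>2 + (norm (y - T x))\<^sup>2 - (norm (x - T x))\<^sup>2
          - (norm (y - T y))\<^sup>2 - 2 * p"
    using assms(5) x y unfolding unif_P2_def p_def by blast
  have e: "(norm (x - T y))\<^sup>2 + (norm (y - T x))\<^sup>2 - (norm (x - T x))\<^sup>2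
          - (norm (y - T y))\<^sup>2 = 2 * (a \<bullet> b)"
    unfolding a_def b_def power2_norm_eq_inner
    by (simp add: inner_diff_left inner_diff_right inner_commute)
  have h1: "b \<bullet> b \<le> a \<bullet> b - p"
    using P e unfolding b_def power2_norm_eq_inner by linarith
  have h2: "0 \<le> (a - b) \<bullet> (a - b)" by simp
  hence h2': "0 \<le> a \<bullet> a - 2 * (a \<bullet> b) + b \<bullet> b"
    by (simp add: inner_diff_left inner_diff_right inner_commute)
  have h3: "0 \<le> a \<bullet> a - b \<bullet> b - 2 * p" using h1 h2' by linarith
  have h4: "0 \<le> a \<bullet> b - b \<bullet> b - p" using h1 by linarith
  have t0: "0 \<le> t" "t \<le> 1" using t by auto
  have m1: "0 \<le> (1-t)^2 * (a \<bullet> a - b \<bullet> b - 2 * p)" using h3 by simp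
  have m2: "0 \<le> (t*(1-t)) * (a \<bullet> b - b \<bullet> b - p)" using h4 t0 by simp
  have ex: "(norm (((1 - t) *\<^sub>R x + t *\<^sub>R T x) - ((1 - t) *\<^sub>R y + t *\<^sub>R T y)))\<^sup>2
      = (1-t)^2 * (a \<bullet> a) + 2*t*(1-t) * (a \<bullet> b) + t^2 * (b \<bullet> b)"
  proof -
    have "((1 - t) *\<^sub>R x + t *\<^sub>R T x) - ((1 - t) *\<^sub>R y + t *\<^sub>R T y) = (1-t) *\<^sub>R a + t *\<^sub>R b"
      unfolding a_def b_def by (simp add: algebra_simps)
    moreover have "norm ((1-t) *\<^sub>R a + t *\<^sub>R b) ^ 2 = (1-t)^2 * (a \<bullet> a) + 2*t*(1-t) * (a \<bullet> b) + t^2 * (b \<bullet> b)"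
      unfolding power2_norm_eq_inner
      by (simp add: inner_add_left inner_add_right inner_commute power2_eq_square algebra_simps)
    ultimately show ?thesis by simp
  qed
  have "b \<bullet> b \<le> (1-t)^2 * (a \<bullet> a) + 2*t*(1-t) * (a \<bullet> b) + t^2 * (b \<bullet> b) - 2 * (1 - t) * p"
  proof -
    have "(1-t)^2 * (a \<bullet> a) + 2*t*(1-t) * (a \<bullet> b) + t^2 * (b \<bullet> b) - 2 * (1 - t) * p - b \<bullet> b
      = (1-t)^2 * (a \<bullet> a - b \<bullet> b - 2 * p) + 2 * ((t*(1-t)) * (a \<bullet> b - b \<bullet> b - p))"
      by (simp add: power2_eq_square algebra_simps)
    thus ?thesis using m1 m2 by linarith
  qed
  thus "(norm (T x - T y))\<^sup>2 \<le>
          (norm (((1 - t) *\<^sub>R x + t *\<^sub>R T x) - ((1 - t) *\<^sub>R y + t *\<^sub>R T y)))\<^sup>2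
          - 2 * (1 - t) * \<phi> (norm (T x - T y))"
    using ex unfolding p_def b_def power2_norm_eq_inner by linarith
qed

end
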